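(* It is undecidable whether, for an arbitrary ranked alphabet $\Sigma$, computable strong bimonoid $B$, and bottom-up deterministic $(\Sigma,B)$-wta $\mathcal{A}$, there is a crisp-deterministic $(\Sigma,B)$-wta $\mathcal{B}$ such that $[\![\mathcal{B}]\!]^{\mathrm{init}}=[\![\mathcal{A}]\!]^{\mathrm{init}}$.
   Context: Ranked alphabet $\Sigma$ ($\Sigma^{(0)}\ne\emptyset$), trees $T_\Sigma$. A strong bimonoid $(B,\oplus,\otimes,\mathbb{0},\mathbb{1})$: commutative monoid $(B,\oplus,\mathbb{0})$, monoid $(B,\otimes,\mathbb{1})$, $\mathbb{0}\ne\mathbb{1}$, $\mathbb{0}$ multiplicatively absorbing, no distributivity; it is computable if $B$ is a recursive set and $\oplus,\otimes$ are computable. $(\Sigma,B)$-wta $\mathcal{A}=(Q,\delta,F)$: $Q$ finite nonempty, $\delta_k:Q^k\times\Sigma^{(k)}\times Q\to B$, $F:Q\to B$. $h_{\mathrm{V}(\mathcal{A})}:T_\Sigma\to B^Q$: $h_{\mathrm{V}(\mathcal{A})}(\sigma(\xi_1,\dots,\xi_k))_q=\bigoplus_{q_1,\dots,q_k}\big(\bigotimes_{i=1}^k h_{\mathrm{V}(\mathcal{A})}(\xi_i)_{q_i}\big)\otimes\delta_k(q_1\dots q_k,\sigma,q)$; $[\![\mathcal{A}]\!]^{\mathrm{init}}(\xi)=\bigoplus_q h_{\mathrm{V}(\mathcal{A})}(\xi)_q\otimes F_q$. Bottom-up deterministic: for all $k,\sigma,q_1,\dots,q_k$ at most one $q$ with $\delta_k(q_1\dots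 q_k,\sigma,q)\ne\mathbb{0}$. Crisp-deterministic: exactly one $q$ with $\delta_k(q_1\dots q_k,\sigma,q)=\mathbb{1}$ and all others $\mathbb{0}$. *)

theory Defs
  imports Main "HOL-Library.Nat_Bijection"
begin

datatype recf =
    Z
  | S
  | Id nat
  | Cn recf "recf list"
  | Pr recf recf
  | Mn recf

inductive eval :: "recf \<Rightarrow> nat list \<Rightarrow> nat \<Rightarrow> bool" where
  eval_Z: "eval Z xs 0"
| eval_S: "eval S (x # xs) (Suc x)"
| eval_Id: "i < length xs \<Longrightarrow> eval (Id i) xs (xs ! i)"
| eval_Cn: "list_all2 (\<lambda>g y. eval g xs y) gs ys \<Longrightarrow> eval f ys r \<Longrightarrow> eval (Cn f gs) xs r"
| eval_Pr0: "eval f xs r \<Longrightarrow> eval (Pr f g) (0 # xs) r"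
| eval_PrS: "eval (Pr f g) (n # xs) r \<Longrightarrow> eval g (n # r # xs) r' \<Longrightarrow> eval (Pr f g) (Suc n # xs) r'"
| eval_Mn: "eval f (r # xs) 0 \<Longrightarrow> (\<forall>i<r. \<exists>y. eval f (i # xs) y \<and> y > 0) \<Longrightarrow> eval (Mn f) xs r"

text \<open>Value of a program on an input (meaningful only where the program halts).\<close>
definition run :: "recf \<Rightarrow> nat list \<Rightarrow> nat" where
  "run f xs = (THE r. eval f xs r)"

fun recf_enc :: "recf \<Rightarrow> nat" where
  "recf_enc Z = prod_encode (0, 0)"
| "recf_enc S = prod_encode (1, 0)"
| "recf_enc (Id i) = prod_encode (2, i)"
| "recf_enc (Cn f gs) = prod_encode (3, prod_encode (recf_enc f, list_encode (map recf_enc gs)))"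
| "recf_enc (Pr f g) = prod_encode (4, prod_encode (recf_enc f, recf_enc g))"
| "recf_enc (Mn f) = prod_encode (5, recf_enc f)"

definition strong_bimonoid ::
  "nat set \<Rightarrow> (nat \<Rightarrow> nat \<Rightarrow> nat) \<Rightarrow> (nat \<Rightarrow> nat \<Rightarrow> nat) \<Rightarrow> nat \<Rightarrow> nat \<Rightarrow> bool" where
  "strong_bimonoid B pl tm z u \<longleftrightarrow>
     z \<in> B \<and> u \<in> B \<and> z \<noteq> u \<and>
     (\<forall>a\<in>B. \<forall>b\<in>B. pl a b \<in> B \<and> tm a b \<in> B) \<and>
     (\<forall>a\<in>B. \<forall>b\<in>B. \<forall>c\<in>B. pl (pl a b) c = pl a (pl b c)) \<and>
     (\<forall>a\<in>B. \<forall>b\<in>B. pl a b = pl b a) \<and>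
     (\<forall>a\<in>B. pl z a = a) \<and>
     (\<forall>a\<in>B. \<forall>b\<in>B. \<forall>c\<in>B. tm (tm a b) c = tm a (tm b c)) \<and>
     (\<forall>a\<in>B. tm u a = a \<and> tm a u = a) \<and>
     (\<forall>a\<in>B. tm z a = z \<and> tm a z = z)"

text \<open>A ranked alphabet is a finite set of symbols; a symbol is a pair (name, rank).\<close>
datatype tree = Node "nat \<times> nat" "tree list"

fun wf_tree :: "(nat \<times> nat) set \<Rightarrow> tree \<Rightarrow> bool" where
  "wf_tree Sig (Node s ts) \<longleftrightarrow> s \<in> Sig \<and> snd s = length ts \<and> (\<forall>t\<in>set ts. wf_tree Sig t)"

definition bsum :: "(nat \<Rightarrow> nat \<Rightarrow> nat) \<Rightarrow> nat \<Rightarrow> nat list \<Rightarrow> nat" where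
  "bsum pl z xs = foldr pl xs z"

definition bprod :: "(nat \<Rightarrow> nat \<Rightarrow> nat) \<Rightarrow> nat \<Rightarrow> nat list \<Rightarrow> nat" where
  "bprod tm u xs = foldl tm u xs"

fun hV :: "(nat \<Rightarrow> nat \<Rightarrow> nat) \<Rightarrow> (nat \<Rightarrow> nat \<Rightarrow> nat) \<Rightarrow> nat \<Rightarrow> nat \<Rightarrow> nat
           \<Rightarrow> (nat list \<Rightarrow> nat \<times> nat \<Rightarrow> nat \<Rightarrow> nat) \<Rightarrow> tree \<Rightarrow> nat \<Rightarrow> nat" where
  "hV pl tm z u n \<delta> (Node s ts) =
     (let hs = map (hV pl tm z u n \<delta>) ts in
      (\<lambda>q. bsum pl z
             (map (\<lambda>qs. tm (bprod tm u (map2 (\<lambda>h qi. h qi) hs qs)) (\<delta> qs s q))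
                  (List.n_lists (length ts) [0..<n]))))"

definition wta_sem :: "(nat \<Rightarrow> nat \<Rightarrow> nat) \<Rightarrow> (nat \<Rightarrow> nat \<Rightarrow> nat) \<Rightarrow> nat \<Rightarrow> nat \<Rightarrow> nat
           \<Rightarrow> (nat list \<Rightarrow> nat \<times> nat \<Rightarrow> nat \<Rightarrow> nat) \<Rightarrow> (nat \<Rightarrow> nat) \<Rightarrow> tree \<Rightarrow> nat" where
  "wta_sem pl tm z u n \<delta> F \<xi> = bsum pl z (map (\<lambda>q. tm (hV pl tm z u n \<delta> \<xi> q) (F q)) [0..<n])"

definition bu_deterministic :: "(nat \<times> nat) set \<Rightarrow> nat \<Rightarrow> nat \<Rightarrow> (nat list \<Rightarrow> nat \<times> nat \<Rightarrow> nat \<Rightarrow> nat) \<Rightarrow> bool" where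
  "bu_deterministic Sig z n \<delta> \<longleftrightarrow>
     (\<forall>s\<in>Sig. \<forall>qs. length qs = snd s \<longrightarrow> set qs \<subseteq> {..<n} \<longrightarrow>
        (\<forall>q\<in>{..<n}. \<forall>q'\<in>{..<n}. \<delta> qs s q \<noteq> z \<longrightarrow> \<delta> qs s q' \<noteq> z \<longrightarrow> q = q'))"

definition crisp_deterministic :: "(nat \<times> nat) set \<Rightarrow> nat \<Rightarrow> nat \<Rightarrow> nat \<Rightarrow> (nat list \<Rightarrow> nat \<times> nat \<Rightarrow> nat \<Rightarrow> nat) \<Rightarrow> bool" where
  "crisp_deterministic Sig z u n \<delta> \<longleftrightarrow>
     (\<forall>s\<in>Sig. \<forall>qs. length qs = snd s \<longrightarrow> set qs \<subseteq> {..<n} \<longrightarrow>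
        (\<exists>!q. q < n \<and> \<delta> qs s q = u) \<and> (\<forall>q<n. \<delta> qs s q = u \<or> \<delta> qs s q = z))"

record inst =
  sig    :: "(nat \<times> nat) list"   \<comment> \<open>ranked alphabet: list of (name, rank)\<close>
  memB   :: recf                   \<comment> \<open>characteristic function of B \<subseteq> nat\<close>
  plusB  :: recf
  timesB :: recf
  zeroB  :: nat
  oneB   :: nat
  nQ     :: nat                    \<comment> \<open>states are 0..<nQ\<close>
  delta  :: "((nat list \<times> (nat \<times> nat) \<times> nat) \<times> nat) list"  \<comment> \<open>transition table; missing entries have weight zero\<close>
  fin    :: "nat list"

definition Sig_of :: "inst \<Rightarrow> (nat \<times> nat) set" where "Sig_of I = set (sig I)"
definition B_of :: "inst \<Rightarrow> nat set" where "B_of I = {x. eval (memB I) [x] 1}"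
definition plus_of :: "inst \<Rightarrow> nat \<Rightarrow> nat \<Rightarrow> nat" where "plus_of I a b = run (plusB I) [a, b]"
definition times_of :: "inst \<Rightarrow> nat \<Rightarrow> nat \<Rightarrow> nat" where "times_of I a b = run (timesB I) [a, b]"
definition delta_of :: "inst \<Rightarrow> nat list \<Rightarrow> nat \<times> nat \<Rightarrow> nat \<Rightarrow> nat" where
  "delta_of I qs s q = (case map_of (delta I) (qs, s, q) of Some w \<Rightarrow> w | None \<Rightarrow> zeroB I)"
definition fin_of :: "inst \<Rightarrow> nat \<Rightarrow> nat" where "fin_of I q = fin I ! q"

definition sem_of :: "inst \<Rightarrow> tree \<Rightarrow> nat" where
  "sem_of I = wta_sem (plus_of I) (times_of I) (zeroB I) (oneB I) (nQ I) (delta_of I) (fin_of I)"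

definition valid_inst :: "inst \<Rightarrow> bool" where
  "valid_inst I \<longleftrightarrow>
     (\<exists>a. (a, 0) \<in> Sig_of I) \<and>
     (\<forall>x. eval (memB I) [x] 0 \<or> eval (memB I) [x] 1) \<and>
     (\<forall>a\<in>B_of I. \<forall>b\<in>B_of I. (\<exists>r. eval (plusB I) [a, b] r) \<and> (\<exists>r. eval (timesB I) [a, b] r)) \<and>
     strong_bimonoid (B_of I) (plus_of I) (times_of I) (zeroB I) (oneB I) \<and>
     nQ I \<ge> 1 \<and>
     (\<forall>e\<in>set (delta I). snd e \<in> B_of I) \<and>
     length (fin I) = nQ I \<and> set (fin I) \<subseteq> B_of I \<and>
     bu_deterministic (Sig_of I) (zeroB I) (nQ I) (delta_of I)"

definition has_crisp_equiv :: "inst \<Rightarrow> bool" where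
  "has_crisp_equiv I \<longleftrightarrow>
     (\<exists>n \<delta> F. n \<ge> 1 \<and> (\<forall>qs s q. \<delta> qs s q \<in> B_of I) \<and> (\<forall>q. F q \<in> B_of I) \<and>
        crisp_deterministic (Sig_of I) (zeroB I) (oneB I) n \<delta> \<and>
        (\<forall>\<xi>. wf_tree (Sig_of I) \<xi> \<longrightarrow>
           wta_sem (plus_of I) (times_of I) (zeroB I) (oneB I) n \<delta> F \<xi> = sem_of I \<xi>))"

definition inst_enc :: "inst \<Rightarrow> nat" where
  "inst_enc I = list_encode
     [ list_encode (map prod_encode (sig I)),
       recf_enc (memB I), recf_enc (plusB I), recf_enc (timesB I),
       zeroB I, oneB I, nQ I,
       list_encode (map (\<lambda>((qs, (a, k), q), w). list_encode [list_encode qs, a, k, q, w]) (delta I)),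
       list_encode (fin I) ]"

end

theory Submission
  imports Defs
begin

lemma list_all2_det:
  "list_all2 P as bs \<Longrightarrow> list_all2 Q as cs \<Longrightarrow> (\<And>a b c. P a b \<Longrightarrow> Q a c \<Longrightarrow> b = c) \<Longrightarrow> bs = cs"
proof (induction arbitrary: cs rule: list_all2_induct)
  case Nil then show ?case by simp
next
  case (Cons x xs y ys)
  from Cons.prems(1) obtain c cs' where "cs = c # cs'" "Q x c" "list_all2 Q xs cs'"
    by (cases cs) auto
  then show ?case using Cons by auto
qed

lemma eval_det: "eval f xs r \<Longrightarrow> eval f xs r' \<Longrightarrow> r = r'"
proof (induction arbitrary: r' rule: eval.induct)
  case (eval_Z xs) from eval_Z.prems show ?case by (cases rule: eval.cases) (use eval_Z in auto)
next
  case (eval_S x xs) from eval_S.prems show ?case by (cases rule: eval.cases) (use eval_S in auto)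
next
  case (eval_Id i xs) from eval_Id.prems show ?case by (cases rule: eval.cases) (use eval_Id in auto)
next
  case (eval_Cn xs gs ys f r)
  from eval_Cn.prems obtain ys' where a: "list_all2 (\<lambda>g y. eval g xs y) gs ys'" "eval f ys' r'"
    by (cases rule: eval.cases) auto
  have "ys = ys'" by (rule list_all2_det[OF eval_Cn.IH(1) a(1)]) auto
  then show ?case using a eval_Cn.IH(2) by auto
next
  case (eval_Pr0 f xs r) from eval_Pr0.prems show ?case by (cases rule: eval.cases) (use eval_Pr0 in auto)
next
  case (eval_PrS f g n xs r r')
  from eval_PrS.prems obtain r2 where "eval (Pr f g) (n # xs) r2" "eval g (n # r2 # xs) r'"
    by (cases rule: eval.cases) auto
  then show ?case using eval_PrS.IH by blast
next
  case (eval_Mn f r xs)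
  from eval_Mn.prems obtain r2 where b: "r' = r2" "eval f (r2 # xs) 0" "\<forall>i<r2. \<exists>y. eval f (i # xs) y \<and> y > 0"
    by (cases rule: eval.cases) auto
  show ?case
  proof (rule linorder_cases[of r r2])
    assume "r < r2"
    then obtain y where "eval f (r # xs) y" "y > 0" using b by auto
    moreover have "\<forall>y'. eval f (r # xs) y' \<longrightarrow> 0 = y'" using eval_Mn by blast
    ultimately show ?thesis by fastforce
  next
    assume "r2 < r"
    then obtain y where "eval f (r2 # xs) y" "y > 0" "\<forall>y'. eval f (r2 # xs) y' \<longrightarrow> y = y'" using eval_Mn.IH(2) b by blast
    then show ?thesis using b by fastforce
  qed (use b in auto)
qed

lemma run_eq: "eval f xs r \<Longrightarrow> run f xs = r"
  unfolding run_def using eval_det by blast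

lemma eval_Cn1: "eval g1 xs a \<Longrightarrow> eval f [a] r \<Longrightarrow> eval (Cn f [g1]) xs r"
  by (rule eval_Cn[of _ _ "[a]"]) auto
lemma eval_Cn2: "eval g1 xs a \<Longrightarrow> eval g2 xs b \<Longrightarrow> eval f [a,b] r \<Longrightarrow> eval (Cn f [g1,g2]) xs r"
  by (rule eval_Cn[of _ _ "[a,b]"]) auto
lemma eval_Cn3: "eval g1 xs a \<Longrightarrow> eval g2 xs b \<Longrightarrow> eval g3 xs c \<Longrightarrow> eval f [a,b,c] r \<Longrightarrow> eval (Cn f [g1,g2,g3]) xs r"
  by (rule eval_Cn[of _ _ "[a,b,c]"]) auto

lemma eval_Id': "i < length xs \<Longrightarrow> xs ! i = v \<Longrightarrow> eval (Id i) xs v"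
  using eval_Id by blast

lemma eval_S': "eval g xs a \<Longrightarrow> eval (Cn S [g]) xs (Suc a)"
  by (rule eval_Cn1) (auto intro: eval_S)

primrec cst :: "nat \<Rightarrow> recf" where
  "cst 0 = Z"
| "cst (Suc n) = Cn S [cst n]"

lemma eval_cst: "eval (cst n) xs n"
  by (induction n) (auto intro: eval_Z eval_S')

definition ADD :: recf where "ADD = Pr (Id 0) (Cn S [Id 1])"

lemma eval_ADD: "eval ADD [a, b] (a + b)"
proof (induction a)
  case 0 show ?case unfolding ADD_def by (auto intro!: eval_Pr0 eval_Id')
next
  case (Suc a)
  show ?case unfolding ADD_def
    by (rule eval_PrS[OF Suc[unfolded ADD_def]]) (auto intro!: eval_S' eval_Id')
qed

definition add2 :: "recf \<Rightarrow> recf \<Rightarrow> recf" where "add2 g1 g2 = Cn ADD [g1, g2]"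
lemma eval_add2: "eval g1 xs a \<Longrightarrow> eval g2 xs b \<Longrightarrow> eval (add2 g1 g2) xs (a + b)"
  unfolding add2_def by (rule eval_Cn2, assumption+, rule eval_ADD)

definition PRED :: recf where "PRED = Pr Z (Id 0)"
lemma eval_PRED: "eval PRED [a] (a - 1)"
proof (cases a)
  case 0 then show ?thesis unfolding PRED_def by (auto intro!: eval_Pr0 eval_Z)
next
  case (Suc n)
  have "\<exists>r. eval PRED [n] r"
  proof (cases n)
    case 0 then show ?thesis unfolding PRED_def by (auto intro!: eval_Pr0 eval_Z)
  next
    case (Suc k)
    have "\<exists>r. eval PRED [k] r"
    proof (induction k)
      case 0 then show ?case unfolding PRED_def by (auto intro!: eval_Pr0 eval_Z)
    next
      case (Suc k) then obtain r where "eval PRED [k] r" by blast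
      then show ?case unfolding PRED_def by (auto intro!: eval_PrS eval_Id')
    qed
    then show ?thesis unfolding PRED_def Suc by (auto intro!: eval_PrS eval_Id')
  qed
  then obtain r where "eval PRED [n] r" by blast
  then show ?thesis unfolding PRED_def Suc by (auto intro!: eval_PrS eval_Id')
qed

definition pred1 :: "recf \<Rightarrow> recf" where "pred1 g = Cn PRED [g]"
lemma eval_pred1: "eval g xs a \<Longrightarrow> eval (pred1 g) xs (a - 1)"
  unfolding pred1_def by (rule eval_Cn1, assumption, rule eval_PRED)

definition ITE :: recf where "ITE = Pr (Id 1) (Id 2)"
lemma eval_ITE_ex: "\<exists>r. eval ITE [n, b, c] r"
proof (induction n)
  case 0 then show ?case unfolding ITE_def by (auto intro!: eval_Pr0 eval_Id')
next
  case (Suc n) then obtain r where "eval ITE [n, b, c] r" by blast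
  then show ?case unfolding ITE_def by (auto intro!: eval_PrS eval_Id')
qed
lemma eval_ITE: "eval ITE [a, b, c] (if a = 0 then c else b)"
proof (cases a)
  case 0 then show ?thesis unfolding ITE_def by (auto intro!: eval_Pr0 eval_Id')
next
  case (Suc n)
  obtain r where "eval ITE [n, b, c] r" using eval_ITE_ex by blast
  then show ?thesis unfolding ITE_def Suc by (auto intro!: eval_PrS eval_Id')
qed

definition ite3 :: "recf \<Rightarrow> recf \<Rightarrow> recf \<Rightarrow> recf" where "ite3 g1 g2 g3 = Cn ITE [g1, g2, g3]"
lemma eval_ite3: "eval g1 xs a \<Longrightarrow> eval g2 xs b \<Longrightarrow> eval g3 xs c \<Longrightarrow> eval (ite3 g1 g2 g3) xs (if a = 0 then c else b)"
  unfolding ite3_def by (rule eval_Cn3, assumption+, rule eval_ITE)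

definition TRI :: recf where "TRI = Pr Z (add2 (Id 1) (Cn S [Id 0]))"
lemma eval_TRI: "eval TRI [n] (triangle n)"
proof (induction n)
  case 0 then show ?case unfolding TRI_def by (auto intro!: eval_Pr0 eval_Z)
next
  case (Suc n)
  have "eval (add2 (Id 1) (Cn S [Id 0])) [n, triangle n] (triangle n + Suc n)"
    by (rule eval_add2) (auto intro!: eval_S' eval_Id')
  from eval_PrS[OF Suc[unfolded TRI_def] this[folded TRI_def, unfolded TRI_def]] show ?case unfolding TRI_def by simp
qed

definition PE :: recf where "PE = add2 (Cn TRI [add2 (Id 0) (Id 1)]) (Id 0)"
lemma eval_PE: "eval PE [a, b] (prod_encode (a, b))"
  unfolding PE_def prod_encode_def
  by (auto intro!: eval_add2 eval_Cn1[OF _ eval_TRI] eval_Id')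

definition pe :: "recf \<Rightarrow> recf \<Rightarrow> recf" where "pe g1 g2 = Cn PE [g1, g2]"
lemma eval_pe: "eval g1 xs a \<Longrightarrow> eval g2 xs b \<Longrightarrow> eval (pe g1 g2) xs (prod_encode (a, b))"
  unfolding pe_def by (rule eval_Cn2, assumption+, rule eval_PE)

definition lcons :: "recf \<Rightarrow> recf \<Rightarrow> recf" where "lcons g1 g2 = Cn S [pe g1 g2]"
lemma eval_lcons: "eval g1 xs a \<Longrightarrow> eval g2 xs (list_encode l) \<Longrightarrow> eval (lcons g1 g2) xs (list_encode (a # l))"
  unfolding lcons_def by (auto intro!: eval_S' eval_pe)
lemma eval_lnil: "eval Z xs (list_encode [])"
  using eval_Z by simp

definition CC :: recf where
  "CC = Pr Z (pe (cst 3) (pe (cst (recf_enc S)) (lcons (Id 1) Z)))"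
lemma eval_CC: "eval CC [n] (recf_enc (cst n))"
proof (induction n)
  case 0 show ?case unfolding CC_def by (auto intro!: eval_Pr0 eval_Z simp: prod_encode_def)
next
  case (Suc n)
  have "eval (pe (cst 3) (pe (cst (recf_enc S)) (lcons (Id 1) Z))) [n, recf_enc (cst n)]
     (prod_encode (3, prod_encode (recf_enc S, list_encode [recf_enc (cst n)])))"
    by (intro eval_pe eval_cst eval_lcons eval_Id') (auto intro: eval_Z)
  then show ?case using Suc unfolding CC_def by (auto intro: eval_PrS simp del: recf_enc.simps(2) list_encode.simps)
qed

primrec prR :: "(nat list \<Rightarrow> nat) \<Rightarrow> (nat list \<Rightarrow> nat) \<Rightarrow> nat \<Rightarrow> nat list \<Rightarrow> nat" where
  "prR F G 0 ys = F ys"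
| "prR F G (Suc i) ys = (let r = prR F G i ys in if r = 0 then 0 else G (i # (r - 1) # ys))"

primrec mnT :: "(nat list \<Rightarrow> nat) \<Rightarrow> nat \<Rightarrow> nat list \<Rightarrow> nat" where
  "mnT F 0 xs = 1"
| "mnT F (Suc i) xs = (let t = mnT F i xs in
     if t = 1 then (let v = F (i # xs) in if v = 0 then 0 else if v = 1 then Suc (Suc i) else 1) else t)"

primrec fe :: "recf \<Rightarrow> nat \<Rightarrow> nat list \<Rightarrow> nat" where
  "fe Z m xs = 1"
| "fe S m xs = (case xs of [] \<Rightarrow> 0 | x # _ \<Rightarrow> Suc (Suc x))"
| "fe (Id i) m xs = (if i < length xs then Suc (xs ! i) else 0)"
| "fe (Cn f gs) m xs = (let ys = map (\<lambda>g. fe g m xs) gs in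
      if 0 \<in> set ys then 0 else fe f m (map (\<lambda>y. y - 1) ys))"
| "fe (Pr f g) m xs = (case xs of [] \<Rightarrow> 0 | n # ys \<Rightarrow> prR (fe f m) (fe g m) n ys)"
| "fe (Mn f) m xs = mnT (fe f m) m xs - 1"

primrec allpos :: "recf list \<Rightarrow> recf" where
  "allpos [] = cst 1"
| "allpos (p # ps) = ite3 p (allpos ps) Z"

lemma eval_allpos: "list_all2 (\<lambda>p v. eval p xs v) ps vs \<Longrightarrow> eval (allpos ps) xs (if 0 \<in> set vs then 0 else 1)"
proof (induction rule: list_all2_induct)
  case Nil then show ?case using eval_cst[of 1] by simp
next
  case (Cons p ps v vs)
  have "(if v = 0 then 0 else if 0 \<in> set vs then 0 else 1) = (if 0 \<in> set (v # vs) then 0 else (1::nat))"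
    by auto
  with eval_ite3[OF Cons(1) Cons(3) eval_Z] show ?case by simp
qed

primrec bnd :: "recf \<Rightarrow> nat \<Rightarrow> recf" where
  "bnd Z k = Cn S [Z]"
| "bnd S k = (if k = 0 then Z else Cn S [Cn S [Id 1]])"
| "bnd (Id i) k = (if i < k then Cn S [Id (Suc i)] else Z)"
| "bnd (Cn f gs) k = ite3 (allpos (map (\<lambda>g. bnd g k) gs))
      (Cn (bnd f (length gs)) (Id 0 # map (\<lambda>g. pred1 (bnd g k)) gs)) Z"
| "bnd (Pr f g) k = (if k = 0 then Z else
      Cn (Pr (bnd f (k - 1))
             (ite3 (Id 1) (Cn (bnd g (Suc k)) (Id 2 # Id 0 # pred1 (Id 1) # map (\<lambda>j. Id (j + 3)) [0..<k - 1])) Z))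
         (Id 1 # Id 0 # map (\<lambda>j. Id (j + 2)) [0..<k - 1]))"
| "bnd (Mn f) k = pred1 (Cn (Pr (cst 1)
      (ite3 (Id 1)
        (ite3 (pred1 (Id 1)) (Id 1)
          (ite3 (Cn (bnd f (Suc k)) (Id 2 # Id 0 # map (\<lambda>j. Id (j + 3)) [0..<k]))
                (ite3 (pred1 (Cn (bnd f (Suc k)) (Id 2 # Id 0 # map (\<lambda>j. Id (j + 3)) [0..<k]))) (cst 1) (Cn S [Cn S [Id 0]]))
                Z))
        Z))
      (Id 0 # Id 0 # map (\<lambda>j. Id (j + 1)) [0..<k]))"

lemma ids_all2: "length pre = p \<Longrightarrow>
  list_all2 (\<lambda>g y. eval g (pre @ ys) y) (map (\<lambda>j. Id (j + p)) [0..<length ys]) ys"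
  by (auto simp: list_all2_conv_all_nth nth_append intro!: eval_Id')

lemma ids_all2': "length pre = p \<Longrightarrow> length ys = n \<Longrightarrow> xs = pre @ ys \<Longrightarrow>
  list_all2 (\<lambda>g y. eval g xs y) (map (\<lambda>j. Id (j + p)) [0..<n]) ys"
  using ids_all2 by blast

lemmas eval_pred1s = eval_pred1[simplified]

lemma eval_bnd: "length xs = k \<Longrightarrow> eval (bnd d k) (m # xs) (fe d m xs)"
proof (induction d arbitrary: k xs)
  case Z then show ?case by (auto intro!: eval_S' eval_Z)
next
  case S then show ?case
    by (cases xs) (auto intro!: eval_S' eval_Z eval_Id')
next
  case (Id i) then show ?case
    by (auto intro!: eval_S' eval_Z eval_Id')
next
  case (Cn f gs)
  let ?vs = "map (\<lambda>g. fe g m xs) gs"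
  have a2: "list_all2 (\<lambda>p v. eval p (m # xs) v) (map (\<lambda>g. bnd g k) gs) ?vs"
    using Cn.IH(2) Cn.prems by (auto simp: list_all2_conv_all_nth)
  have e1: "eval (allpos (map (\<lambda>g. bnd g k) gs)) (m # xs) (if 0 \<in> set ?vs then 0 else 1)"
    by (rule eval_allpos[OF a2])
  have a3': "list_all2 (\<lambda>g y. eval g (m # xs) y) (map (\<lambda>g. pred1 (bnd g k)) gs) (map (\<lambda>g. fe g m xs - 1) gs)"
    unfolding list.rel_map list_all2_same
  proof
    fix g assume "g \<in> set gs"
    from eval_pred1[OF Cn.IH(2)[OF this Cn.prems]] show "eval (pred1 (bnd g k)) (m # xs) (fe g m xs - 1)" .
  qed
  have a3: "list_all2 (\<lambda>g y. eval g (m # xs) y) (Id 0 # map (\<lambda>g. pred1 (bnd g k)) gs) (m # map (\<lambda>y. y - 1) ?vs)"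
    using a3' by (auto intro!: eval_Id' simp: comp_def)
  have e2: "eval (Cn (bnd f (length gs)) (Id 0 # map (\<lambda>g. pred1 (bnd g k)) gs)) (m # xs) (fe f m (map (\<lambda>y. y - 1) ?vs))"
    by (rule eval_Cn[OF a3]) (rule Cn.IH(1), simp)
  have "fe (Cn f gs) m xs = (if 0 \<in> set ?vs then 0 else fe f m (map (\<lambda>y. y - 1) ?vs))"
    by (simp only: fe.simps Let_def)
  with eval_ite3[OF e1 e2 eval_Z] show ?case by (cases "0 \<in> set ?vs") (simp_all only: if_True if_False, simp_all)
next
  case (Pr f g)
  show ?case
  proof (cases xs)
    case Nil then show ?thesis using Pr.prems by (auto intro: eval_Z)
  next
    case (Cons n ys)
    have lys: "length ys = k - 1" using Pr.prems Cons by simp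
    have kpos: "k \<noteq> 0" using Pr.prems Cons by simp
    define G' where "G' = ite3 (Id 1) (Cn (bnd g (Suc k)) (Id 2 # Id 0 # pred1 (Id 1) # map (\<lambda>j. Id (j + 3)) [0..<k - 1])) Z"
    have step: "\<And>i r. eval G' (i # r # m # ys) (if r = 0 then 0 else fe g m (i # (r - 1) # ys))"
    proof -
      fix i r
      have a: "list_all2 (\<lambda>g y. eval g (i # r # m # ys) y) (Id 2 # Id 0 # pred1 (Id 1) # map (\<lambda>j. Id (j + 3)) [0..<k - 1]) (m # i # (r - 1) # ys)"
        using ids_all2'[of "[i, r, m]" 3 ys "k - 1" "i # r # m # ys"] lys
        by (auto intro!: eval_Id' eval_pred1s)
      have "eval (Cn (bnd g (Suc k)) (Id 2 # Id 0 # pred1 (Id 1) # map (\<lambda>j. Id (j + 3)) [0..<k - 1])) (i # r # m # ys) (fe g m (i # (r - 1) # ys))"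
        by (rule eval_Cn[OF a]) (rule Pr.IH(2), use lys kpos in simp)
      moreover have "eval (Id 1) (i # r # m # ys) r" by (rule eval_Id') auto
      ultimately show "?thesis i r" unfolding G'_def using eval_ite3 eval_Z by blast
    qed
    have pr: "eval (Pr (bnd f (k - 1)) G') (i # m # ys) (prR (fe f m) (fe g m) i ys)" for i
    proof (induction i)
      case 0 show ?case using eval_Pr0[OF Pr.IH(1)[OF lys]] by simp
    next
      case (Suc i)
      from eval_PrS[OF Suc step] show ?case by (simp add: Let_def)
    qed
    have a: "list_all2 (\<lambda>g y. eval g (m # n # ys) y) (Id 1 # Id 0 # map (\<lambda>j. Id (j + 2)) [0..<k - 1]) (n # m # ys)"
      using ids_all2'[of "[m, n]" 2 ys "k - 1" "m # n # ys"] lys by (auto intro!: eval_Id')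
    show ?thesis using eval_Cn[OF a pr[of n]] kpos Cons unfolding G'_def by simp
  qed
next
  case (Mn f)
  define V where "V = Cn (bnd f (Suc k)) (Id 2 # Id 0 # map (\<lambda>j. Id (j + 3)) [0..<k])"
  define G' where "G' = ite3 (Id 1)
        (ite3 (pred1 (Id 1)) (Id 1)
          (ite3 V (ite3 (pred1 V) (cst 1) (Cn S [Cn S [Id 0]])) Z))
        Z"
  have ev: "eval V (i # t # m # xs) (fe f m (i # xs))" for i t
  proof -
    have a: "list_all2 (\<lambda>g y. eval g (i # t # m # xs) y) (Id 2 # Id 0 # map (\<lambda>j. Id (j + 3)) [0..<k]) (m # i # xs)"
      using ids_all2'[of "[i, t, m]" 3 xs k "i # t # m # xs"] Mn.prems by (auto intro!: eval_Id')
    show ?thesis unfolding V_def by (rule eval_Cn[OF a]) (rule Mn.IH, simp add: Mn.prems)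
  qed
  have step: "eval G' (i # t # m # xs)
     (if t = 1 then (let v = fe f m (i # xs) in if v = 0 then 0 else if v = 1 then Suc (Suc i) else 1) else t)" for i t
  proof -
    let ?v = "fe f m (i # xs)"
    have e3: "eval (ite3 V (ite3 (pred1 V) (cst 1) (Cn S [Cn S [Id 0]])) Z) (i # t # m # xs)
       (if ?v = 0 then 0 else if ?v = 1 then Suc (Suc i) else 1)"
    proof -
      have "eval (ite3 (pred1 V) (cst 1) (Cn S [Cn S [Id 0]])) (i # t # m # xs) (if ?v - 1 = 0 then Suc (Suc i) else 1)"
        by (rule eval_ite3[OF eval_pred1[OF ev] eval_cst]) (auto intro!: eval_S' eval_Id')
      from eval_ite3[OF ev this eval_Z] show ?thesis by auto
    qed
    have e2: "eval (ite3 (pred1 (Id 1)) (Id 1) (ite3 V (ite3 (pred1 V) (cst 1) (Cn S [Cn S [Id 0]])) Z)) (i # t # m # xs)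
       (if t - 1 = 0 then (if ?v = 0 then 0 else if ?v = 1 then Suc (Suc i) else 1) else t)"
      by (rule eval_ite3[OF eval_pred1 _ e3]) (auto intro: eval_Id')
    have e1: "eval G' (i # t # m # xs) (if t = 0 then 0 else (if t - 1 = 0 then (if ?v = 0 then 0 else if ?v = 1 then Suc (Suc i) else 1) else t))"
      unfolding G'_def by (rule eval_ite3[OF _ e2 eval_Z]) (auto intro: eval_Id')
    show ?thesis using e1 by (cases t) (auto simp: Let_def)
  qed
  have pr: "eval (Pr (cst 1) G') (i # m # xs) (mnT (fe f m) i xs)" for i
  proof (induction i)
    case 0 show ?case by (auto intro!: eval_Pr0 eval_cst[of 1, simplified])
  next
    case (Suc i)
    from eval_PrS[OF Suc step] show ?case by (simp add: Let_def)
  qed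
  have a: "list_all2 (\<lambda>g y. eval g (m # xs) y) (Id 0 # Id 0 # map (\<lambda>j. Id (j + 1)) [0..<k]) (m # m # xs)"
    using ids_all2'[of "[m]" 1 xs k "m # xs"] Mn.prems by (auto intro!: eval_Id')
  show ?case using eval_pred1[OF eval_Cn[OF a pr[of m]]] unfolding G'_def V_def by simp
qed

lemma mnT_inv:
  "(mnT F i xs = 1 \<longrightarrow> (\<forall>j<i. \<exists>y. F (j # xs) = Suc (Suc y))) \<and>
   (\<forall>r. mnT F i xs = Suc (Suc r) \<longrightarrow> r < i \<and> F (r # xs) = 1 \<and> (\<forall>j<r. \<exists>y. F (j # xs) = Suc (Suc y)))"
proof (induction i)
  case 0 then show ?case by simp
next
  case (Suc i)
  show ?case
  proof (cases "mnT F i xs = 1")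
    case True
    then show ?thesis using Suc
      by (cases "F (i # xs)") (auto simp: Let_def less_Suc_eq not0_implies_Suc)
  next
    case False
    then show ?thesis using Suc by (auto simp: Let_def less_Suc_eq)
  qed
qed

lemma fe_sound: "fe d m xs = Suc r \<Longrightarrow> eval d xs r"
proof (induction d arbitrary: xs r)
  case Z then show ?case by (auto intro: eval_Z)
next
  case S then show ?case by (cases xs) (auto intro: eval_S)
next
  case (Id i) then show ?case by (auto intro!: eval_Id' split: if_splits)
next
  case (Cn f gs)
  let ?vs = "map (\<lambda>g. fe g m xs) gs"
  have nz: "0 \<notin> set ?vs" and ff: "fe f m (map (\<lambda>y. y - 1) ?vs) = Suc r"
    using Cn.prems by (auto simp: Let_def split: if_splits)
  have "list_all2 (\<lambda>g y. eval g xs y) gs (map (\<lambda>y. y - 1) ?vs)"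
    unfolding list_all2_conv_all_nth
  proof (intro conjI allI impI)
    fix i assume i: "i < length gs"
    then have "fe (gs ! i) m xs \<noteq> 0" using nz by (metis length_map nth_map nth_mem)
    then obtain y where y: "fe (gs ! i) m xs = Suc y" using not0_implies_Suc by blast
    have "eval (gs ! i) xs y" using Cn.IH(2)[OF nth_mem[OF i] y] .
    then show "eval (gs ! i) xs (map (\<lambda>y. y - 1) ?vs ! i)" using i y by simp
  qed simp
  then show ?case using Cn.IH(1)[OF ff] by (rule eval_Cn)
next
  case (Pr f g)
  obtain n ys where xs: "xs = n # ys" using Pr.prems by (cases xs) auto
  have "prR (fe f m) (fe g m) n ys = Suc r \<Longrightarrow> eval (Pr f g) (n # ys) r" for r
  proof (induction n arbitrary: r)
    case 0 then show ?case using Pr.IH(1) by (auto intro: eval_Pr0)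
  next
    case (Suc n)
    obtain r0 where r0: "prR (fe f m) (fe g m) n ys = Suc r0"
      using Suc.prems by (cases "prR (fe f m) (fe g m) n ys") (auto simp: Let_def)
    then have "fe g m (n # r0 # ys) = Suc r" using Suc.prems by (simp add: Let_def)
    then show ?case using Suc.IH[OF r0] Pr.IH(2) by (auto intro: eval_PrS)
  qed
  then show ?case using Pr.prems xs by simp
next
  case (Mn f)
  have t: "mnT (fe f m) m xs = Suc (Suc r)" using Mn.prems by simp
  then have h: "fe f m (r # xs) = 1" "\<forall>j<r. \<exists>y. fe f m (j # xs) = Suc (Suc y)"
    using mnT_inv[of "fe f m" m xs] by auto
  show ?case
  proof (rule eval_Mn)
    show "eval f (r # xs) 0" using Mn.IH h(1) by simp
    show "\<forall>i<r. \<exists>y. eval f (i # xs) y \<and> 0 < y"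
      using h(2) Mn.IH by blast
  qed
qed

lemma all2_unif: fixes P :: "nat \<Rightarrow> 'a \<Rightarrow> 'b \<Rightarrow> bool" shows
  "list_all2 (\<lambda>g y. \<exists>M. \<forall>m\<ge>M. P m g y) gs ys \<Longrightarrow> \<exists>M. \<forall>m\<ge>M. list_all2 (P m) gs ys"
proof (induction rule: list_all2_induct)
  case Nil then show ?case by simp
next
  case (Cons g gs y ys)
  obtain M1 where M1: "\<forall>m\<ge>M1. P m g y" using Cons(1) by blast
  obtain M2 where M2: "\<forall>m\<ge>M2. list_all2 (P m) gs ys" using Cons(3) by blast
  show ?case
  proof (intro exI[of _ "max M1 M2"] allI impI)
    fix m assume "max M1 M2 \<le> m"
    then have "M1 \<le> m" "M2 \<le> m" by auto
    then have "P m g y" "list_all2 (P m) gs ys" using M1 M2 by blast+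
    then show "list_all2 (P m) (g # gs) (y # ys)" by simp
  qed
qed

lemma bounded_unif: fixes r :: nat and P :: "nat \<Rightarrow> nat \<Rightarrow> bool"
  shows "(\<forall>i<r. \<exists>M. \<forall>m\<ge>M. P m i) \<Longrightarrow> \<exists>M. \<forall>m\<ge>M. \<forall>i<r. P m i"
proof (induction r)
  case 0 then show ?case by simp
next
  case (Suc r)
  have "\<forall>i<r. \<exists>M. \<forall>m\<ge>M. P m i" using Suc.prems by simp
  then obtain M1 where M1: "\<forall>m\<ge>M1. \<forall>i<r. P m i" using Suc.IH by blast
  obtain M2 where M2: "\<forall>m\<ge>M2. P m r" using Suc.prems by blast
  show ?case
  proof (intro exI[of _ "max M1 M2"] allI impI)
    fix m i assume "max M1 M2 \<le> m" "i < Suc r"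
    then show "P m i" using M1 M2 by (cases "i = r") auto
  qed
qed

lemma mnT_found:
  fixes j r :: nat and F :: "nat list \<Rightarrow> nat"
  assumes "\<forall>i<r. \<exists>y. F (i # xs) = Suc (Suc y)" "F (r # xs) = 1"
  shows "(j \<le> r \<longrightarrow> mnT F j xs = 1) \<and> (r < j \<longrightarrow> mnT F j xs = Suc (Suc r))"
proof (induction j)
  case 0 then show ?case by simp
next
  case (Suc j)
  show ?case
  proof (cases "j < r")
    case True
    then obtain y where y: "F (j # xs) = Suc (Suc y)" using assms by blast
    have "mnT F j xs = 1" using Suc.IH True by simp
    then have "mnT F (Suc j) xs = 1" using y by (simp add: Let_def)
    then show ?thesis using True by simp
  next
    case False
    show ?thesis
    proof (cases "j = r")
      case True
      have "mnT F j xs = 1" using Suc.IH True by simp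
      then have "mnT F (Suc j) xs = Suc (Suc r)" using assms(2) True by (simp add: Let_def)
      then show ?thesis using True by simp
    next
      case False
      then have jr: "r < j" using \<open>\<not> j < r\<close> by simp
      then have "mnT F j xs = Suc (Suc r)" using Suc.IH by simp
      then have "mnT F (Suc j) xs = Suc (Suc r)" by (simp add: Let_def)
      then show ?thesis using jr by simp
    qed
  qed
qed

lemma fe_complete: "eval d xs r \<Longrightarrow> \<exists>M. \<forall>m\<ge>M. fe d m xs = Suc r"
proof (induction rule: eval.induct)
  case (eval_Z xs) then show ?case by simp
next
  case (eval_S x xs) then show ?case by simp
next
  case (eval_Id i xs) then show ?case by simp
next
  case (eval_Cn xs gs ys f r)
  have "list_all2 (\<lambda>g y. \<exists>M. \<forall>m\<ge>M. fe g m xs = Suc y) gs ys"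
    using eval_Cn.IH(1) by (rule list_all2_mono) blast
  then obtain M1 where M1: "\<forall>m\<ge>M1. list_all2 (\<lambda>g y. fe g m xs = Suc y) gs ys"
    using all2_unif[where P="\<lambda>m g y. fe g m xs = Suc y"] by presburger
  obtain M2 where M2: "\<forall>m\<ge>M2. fe f m ys = Suc r" using eval_Cn.IH(2) by blast
  have "fe (Cn f gs) m xs = Suc r" if "m \<ge> max M1 M2" for m
  proof -
    have "M1 \<le> m" using that by simp
    then have a: "list_all2 (\<lambda>g y. fe g m xs = Suc y) gs ys" using M1 by blast
    then have "map (\<lambda>g. fe g m xs) gs = map Suc ys"
      by (auto simp: list_all2_conv_all_nth intro!: nth_equalityI)
    moreover have "fe f m ys = Suc r" using M2 that by simp
    ultimately show ?thesis by (simp add: Let_def comp_def)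
  qed
  then show ?case by blast
next
  case (eval_Pr0 f xs r) then show ?case by simp
next
  case (eval_PrS f g n xs r r')
  obtain M1 where M1: "\<forall>m\<ge>M1. fe (Pr f g) m (n # xs) = Suc r" using eval_PrS.IH(1) by blast
  obtain M2 where M2: "\<forall>m\<ge>M2. fe g m (n # r # xs) = Suc r'" using eval_PrS.IH(2) by blast
  show ?case
  proof (intro exI[of _ "max M1 M2"] allI impI)
    fix m assume "max M1 M2 \<le> m"
    then have m: "M1 \<le> m" "M2 \<le> m" by auto
    have "prR (fe f m) (fe g m) n xs = Suc r" using M1 m(1) by fastforce
    moreover have "fe g m (n # r # xs) = Suc r'" using M2 m(2) by blast
    ultimately show "fe (Pr f g) m (Suc n # xs) = Suc r'" by (simp add: Let_def)
  qed
next
  case (eval_Mn f r xs)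
  obtain M0 where M0: "\<forall>m\<ge>M0. fe f m (r # xs) = 1" using eval_Mn.IH(1) by auto
  have "\<forall>i<r. \<exists>M. \<forall>m\<ge>M. \<exists>y. fe f m (i # xs) = Suc (Suc y)"
  proof (intro allI impI)
    fix i assume "i < r"
    then obtain y M where "y > 0" "\<forall>m\<ge>M. fe f m (i # xs) = Suc y" using eval_Mn.IH(2) by blast
    moreover obtain y' where "y = Suc y'" using \<open>y > 0\<close> not0_implies_Suc by blast
    ultimately show "\<exists>M. \<forall>m\<ge>M. \<exists>y. fe f m (i # xs) = Suc (Suc y)"
      by blast
  qed
  from bounded_unif[where P = "\<lambda>m i. \<exists>y. fe f m (i # xs) = Suc (Suc y)", OF this]
  obtain M1 where M1: "\<forall>m\<ge>M1. \<forall>i<r. \<exists>y. fe f m (i # xs) = Suc (Suc y)"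
    by blast
  have "fe (Mn f) m xs = Suc r" if "m \<ge> max (max M0 M1) (Suc r)" for m
  proof -
    have m: "M0 \<le> m" "M1 \<le> m" "r < m" using that by auto
    have a1: "fe f m (r # xs) = 1" using M0 m(1) by blast
    have a2: "\<forall>i<r. \<exists>y. fe f m (i # xs) = Suc (Suc y)" using M1 m(2) by blast
    have "mnT (fe f m) m xs = Suc (Suc r)"
      using mnT_found[of r "fe f m" xs, OF a2 a1] m(3) by blast
    then show ?thesis by simp
  qed
  then show ?case by blast
qed

definition EVp :: "recf \<Rightarrow> recf" where
  "EVp d = ite3 (Cn (bnd d 1) [Id 0, Id 2]) (ite3 (pred1 (Cn (bnd d 1) [Id 0, Id 2])) Z (cst 1)) Z"
definition SRG :: "recf \<Rightarrow> recf" where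
  "SRG d = ite3 (Id 1) (Id 1) (ite3 (EVp d) (Cn S [Id 0]) Z)"
definition SR :: "recf \<Rightarrow> recf" where "SR d = Pr Z (SRG d)"
definition Gp :: "recf \<Rightarrow> recf" where
  "Gp d = ite3 (Cn (SR d) [Id 0, Id 1]) (Cn (SR d) [Id 0, Id 1]) (Id 0)"
definition OPP :: "recf \<Rightarrow> recf" where
  "OPP d = ite3 (Id 0) (ite3 (pred1 (Id 0)) (ite3 (Id 1) (ite3 (pred1 (Id 1))
      (Cn S [Cn (Gp d) [pred1 (pred1 (add2 (Id 0) (Id 1))), Id 2]]) (Id 0)) Z) (Id 1)) Z"

definition evm :: "recf \<Rightarrow> nat \<Rightarrow> nat \<Rightarrow> bool" where "evm d e i \<longleftrightarrow> fe d i [e] = 1"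

primrec SRm :: "recf \<Rightarrow> nat \<Rightarrow> nat \<Rightarrow> nat" where
  "SRm d e 0 = 0"
| "SRm d e (Suc i) = (if SRm d e i \<noteq> 0 then SRm d e i else if evm d e i then Suc i else 0)"

definition Gm :: "recf \<Rightarrow> nat \<Rightarrow> nat \<Rightarrow> nat" where
  "Gm d e n = (if SRm d e n = 0 then n else SRm d e n)"

definition opm :: "recf \<Rightarrow> nat \<Rightarrow> nat \<Rightarrow> nat \<Rightarrow> nat" where
  "opm d e x y = (if x = 0 then 0 else if x = 1 then y else if y = 0 then 0 else if y = 1 then x
                  else Suc (Gm d e (x + y - 2)))"

lemma eval_EVp: "eval (EVp d) (i # s # [e]) (if evm d e i then 1 else 0)"
proof -
  have v: "eval (Cn (bnd d 1) [Id 0, Id 2]) (i # s # [e]) (fe d i [e])"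
    by (rule eval_Cn2[OF _ _ eval_bnd]) (auto intro: eval_Id')
  have "eval (ite3 (pred1 (Cn (bnd d 1) [Id 0, Id 2])) Z (cst 1)) (i # s # [e]) (if fe d i [e] - 1 = 0 then 1 else 0)"
    by (rule eval_ite3[OF eval_pred1[OF v] eval_Z eval_cst])
  from eval_ite3[OF v this eval_Z] show ?thesis unfolding EVp_def evm_def
    by (cases "fe d i [e]") (auto split: if_splits)
qed

lemma eval_SR: "eval (SR d) [n, e] (SRm d e n)"
proof (induction n)
  case 0 show ?case unfolding SR_def by (auto intro!: eval_Pr0 eval_Z)
next
  case (Suc n)
  have "eval (SRG d) (n # SRm d e n # [e]) (SRm d e (Suc n))"
  proof -
    have a: "eval (ite3 (EVp d) (Cn S [Id 0]) Z) (n # SRm d e n # [e]) (if evm d e n then Suc n else 0)"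
    proof -
      have "eval (Id 0) (n # SRm d e n # [e]) n" by (rule eval_Id') auto
      from eval_ite3[OF eval_EVp[of d n "SRm d e n" e] eval_S'[OF this] eval_Z] show ?thesis by (cases "evm d e n") simp_all
    qed
    have "eval (Id 1) (n # SRm d e n # [e]) (SRm d e n)" by (rule eval_Id') auto
    note X = eval_ite3[OF this this a]
    have eq: "SRm d e (Suc n) = (if SRm d e n = 0 then (if evm d e n then Suc n else 0) else SRm d e n)" by simp
    show ?thesis unfolding SRG_def eq by (rule X)
  qed
  then show ?case using Suc unfolding SR_def by (auto intro: eval_PrS)
qed

lemma eval_Gp: "eval (Gp d) [n, e] (Gm d e n)"
proof -
  have a: "eval (Cn (SR d) [Id 0, Id 1]) [n, e] (SRm d e n)"
    by (rule eval_Cn2[OF _ _ eval_SR]) (auto intro: eval_Id')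
  have "eval (Id 0) [n, e] n" by (rule eval_Id') auto
  from eval_ite3[OF a a this] show ?thesis unfolding Gp_def Gm_def by simp
qed

lemma eval_OPP: "eval (OPP d) [x, y, e] (opm d e x y)"
proof -
  let ?xs = "[x, y, e]"
  have ix: "eval (Id 0) ?xs x" and iy: "eval (Id 1) ?xs y" and ie: "eval (Id 2) ?xs e"
    by (auto intro: eval_Id')
  have g: "eval (Cn S [Cn (Gp d) [pred1 (pred1 (add2 (Id 0) (Id 1))), Id 2]]) ?xs (Suc (Gm d e (x + y - 1 - 1)))"
    by (rule eval_S'[OF eval_Cn2[OF eval_pred1[OF eval_pred1[OF eval_add2[OF ix iy]]] ie eval_Gp]])
  have c: "eval (ite3 (pred1 (Id 1)) (Cn S [Cn (Gp d) [pred1 (pred1 (add2 (Id 0) (Id 1))), Id 2]]) (Id 0)) ?xs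
      (if y - 1 = 0 then x else Suc (Gm d e (x + y - 1 - 1)))"
    by (rule eval_ite3[OF eval_pred1[OF iy] g ix])
  have b: "eval (ite3 (Id 1) (ite3 (pred1 (Id 1)) (Cn S [Cn (Gp d) [pred1 (pred1 (add2 (Id 0) (Id 1))), Id 2]]) (Id 0)) Z) ?xs
      (if y = 0 then 0 else (if y - 1 = 0 then x else Suc (Gm d e (x + y - 1 - 1))))"
    by (rule eval_ite3[OF iy c eval_Z])
  have a: "eval (ite3 (pred1 (Id 0)) (ite3 (Id 1) (ite3 (pred1 (Id 1)) (Cn S [Cn (Gp d) [pred1 (pred1 (add2 (Id 0) (Id 1))), Id 2]]) (Id 0)) Z) (Id 1)) ?xs
      (if x - 1 = 0 then y else (if y = 0 then 0 else (if y - 1 = 0 then x else Suc (Gm d e (x + y - 1 - 1)))))"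
    by (rule eval_ite3[OF eval_pred1[OF ix] b iy])
  from eval_ite3[OF ix a eval_Z] show ?thesis unfolding OPP_def opm_def
    by (cases x; cases y) (auto simp: numeral_2_eq_2)
qed

lemma SRm_char: "SRm d e n = (if \<exists>m<n. evm d e m then Suc (LEAST m. evm d e m) else 0)"
proof (induction n)
  case 0 then show ?case by simp
next
  case (Suc n)
  show ?case
  proof (cases "\<exists>m<n. evm d e m")
    case True then show ?thesis using Suc by (auto simp: less_Suc_eq)
  next
    case False
    then have nm: "\<forall>m<n. \<not> evm d e m" by blast
    show ?thesis
    proof (cases "evm d e n")
      case True
      have "(LEAST m. evm d e m) = n"
        by (rule Least_equality[of "evm d e" n, OF True]) (use nm in \<open>auto simp: not_less[symmetric]\<close>)
      then show ?thesis using Suc False True by auto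
    next
      case False
      then show ?thesis using Suc nm by (auto simp: less_Suc_eq)
    qed
  qed
qed

lemma Gm_cases: "(\<not> (\<exists>m. evm d e m) \<and> (\<forall>n. Gm d e n = n)) \<or>
   ((\<exists>m. evm d e m) \<and> (\<forall>n. Gm d e n = min n (Suc (LEAST m. evm d e m))))"
proof (cases "\<exists>m. evm d e m")
  case True
  let ?m0 = "LEAST m. evm d e m"
  have "Gm d e n = min n (Suc ?m0)" for n
  proof (cases "?m0 < n")
    case True
    then have "\<exists>m<n. evm d e m" using LeastI_ex[OF \<open>\<exists>m. evm d e m\<close>] by blast
    then show ?thesis using True unfolding Gm_def SRm_char by auto
  next
    case False
    then have "\<not> (\<exists>m<n. evm d e m)" using Least_le[of "evm d e"] by (meson le_less_trans)
    then show ?thesis using False unfolding Gm_def SRm_char by auto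
  qed
  then show ?thesis using True by blast
next
  case False
  then show ?thesis unfolding Gm_def SRm_char by auto
qed

lemma opm_simps:
  "opm d e 0 x = 0" "opm d e x 0 = 0" "opm d e 1 x = x" "opm d e x 1 = x"
  by (auto simp: opm_def)

lemma opm_simps1: "opm d e (Suc 0) x = x" "opm d e x (Suc 0) = x"
  by (auto simp: opm_def)

lemma opm_ge2: "x \<ge> 2 \<Longrightarrow> y \<ge> 2 \<Longrightarrow> opm d e x y = Suc (Gm d e (x + y - 2))"
  by (simp add: opm_def)

lemma Gm_pos: "n \<ge> 1 \<Longrightarrow> Gm d e n \<ge> 1"
  using Gm_cases[of d e] by auto

lemma min_arith: assumes "(T::nat) \<ge> 1" "x \<ge> 2" "y \<ge> 2" "z \<ge> 2" shows
   "min (Suc (min (x + y - 2) T) + z - 2) T = min (x + Suc (min (y + z - 2) T) - 2) T"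
proof -
  have m: "min (min a T + c) T = min (a + c) T" if "c \<ge> 1" for a c :: nat
    using that by (cases "a \<le> T") (simp_all add: min_def)
  have "Suc (min (x + y - 2) T) + z - 2 = min (x + y - 2) T + (z - 1)" using \<open>z \<ge> 2\<close> by simp
  moreover have "x + Suc (min (y + z - 2) T) - 2 = min (y + z - 2) T + (x - 1)" using \<open>x \<ge> 2\<close> by simp
  moreover have "x + y - 2 + (z - 1) = y + z - 2 + (x - 1)" using \<open>x \<ge> 2\<close> \<open>y \<ge> 2\<close> \<open>z \<ge> 2\<close> by simp
  ultimately show ?thesis using m[of "z - 1" "x + y - 2"] m[of "x - 1" "y + z - 2"] \<open>x \<ge> 2\<close> \<open>z \<ge> 2\<close> by simp
qed

lemma opm_assoc: "opm d e (opm d e x y) z = opm d e x (opm d e y z)"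
proof -
  have main: "opm d e (opm d e x y) z = opm d e x (opm d e y z)" if "x \<ge> 2" "y \<ge> 2" "z \<ge> 2"
  proof -
    have xy: "opm d e x y = Suc (Gm d e (x + y - 2))" and yz: "opm d e y z = Suc (Gm d e (y + z - 2))"
      using that opm_ge2 by auto
    have p1: "Suc (Gm d e (x + y - 2)) \<ge> 2" and p2: "Suc (Gm d e (y + z - 2)) \<ge> 2"
      using Gm_pos[of "x + y - 2" d e] Gm_pos[of "y + z - 2" d e] that by auto
    have l: "opm d e (opm d e x y) z = Suc (Gm d e (Suc (Gm d e (x + y - 2)) + z - 2))"
      unfolding xy using opm_ge2[OF p1 that(3)] .
    have r: "opm d e x (opm d e y z) = Suc (Gm d e (x + Suc (Gm d e (y + z - 2)) - 2))"
      unfolding yz using opm_ge2[OF that(1) p2] .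
    consider (a) "\<forall>n. Gm d e n = n" | (b) T where "T \<ge> 1" "\<forall>n. Gm d e n = min n T"
      using Gm_cases[of d e] by fastforce
    then show ?thesis
    proof cases
      case a then show ?thesis unfolding l r using that by simp
    next
      case b then show ?thesis unfolding l r using min_arith[OF b(1) that] by simp
    qed
  qed
  show ?thesis
  proof (cases "x \<le> 1 \<or> y \<le> 1 \<or> z \<le> 1")
    case True
    then consider "x = 0" | "x = 1" | "y = 0" | "y = 1" | "z = 0" | "z = 1" by linarith
    then show ?thesis
    proof cases
      case 3 then show ?thesis by (simp add: opm_simps opm_simps1)
    next
      case 4 then show ?thesis by (simp add: opm_simps opm_simps1)
    next
      case 5 then show ?thesis by (simp add: opm_simps opm_simps1)
    next
      case 6 then show ?thesis by (simp add: opm_simps opm_simps1)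
    qed (simp_all add: opm_simps opm_simps1)
  next
    case False then show ?thesis using main by simp
  qed
qed

definition ONE :: recf where "ONE = Cn S [Z]"
definition sigL :: "(nat \<times> nat) list" where "sigL = [(0, 0), (1, 1)]"
definition deltaL :: "((nat list \<times> (nat \<times> nat) \<times> nat) \<times> nat) list" where
  "deltaL = [(([], (0, 0), 0), 1), (([0], (1, 1), 0), 2)]"
definition finL :: "nat list" where "finL = [1]"

definition kS :: nat where "kS = list_encode (map prod_encode sigL)"
definition kD :: nat where "kD = list_encode (map (\<lambda>((qs, (a, k), q), w). list_encode [list_encode qs, a, k, q, w]) deltaL)"
definition kF :: nat where "kF = list_encode finL"

definition EE :: "nat \<Rightarrow> nat" where
  "EE c = list_encode [kS, recf_enc ONE, recf_enc ADD,
     prod_encode (3, prod_encode (c, list_encode [recf_enc (cst c), recf_enc (Id 0), recf_enc (Id 1)])),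
     0, 1, 1, kD, kF]"

definition TCg :: recf where
  "TCg = pe (cst 3) (pe (Id 0) (lcons (Cn CC [Id 0]) (lcons (cst (recf_enc (Id 0))) (lcons (cst (recf_enc (Id 1))) Z))))"

definition Ecomp :: recf where
  "Ecomp = lcons (cst kS) (lcons (cst (recf_enc ONE)) (lcons (cst (recf_enc ADD)) (lcons TCg
     (lcons (cst 0) (lcons (cst 1) (lcons (cst 1) (lcons (cst kD) (lcons (cst kF) Z))))))))"

definition Body :: "recf \<Rightarrow> recf" where "Body d = Cn (OPP d) [Id 1, Id 2, Ecomp]"
definition TB :: "recf \<Rightarrow> recf" where "TB d = Cn (Body d) [cst (recf_enc (Body d)), Id 0, Id 1]"

definition K :: "recf \<Rightarrow> inst" where
  "K d = \<lparr>sig = sigL, memB = ONE, plusB = ADD, timesB = TB d, zeroB = 0, oneB = 1, nQ = 1,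
          delta = deltaL, fin = finL\<rparr>"

lemma eval_TCg: "eval TCg (c # xs)
   (prod_encode (3, prod_encode (c, list_encode [recf_enc (cst c), recf_enc (Id 0), recf_enc (Id 1)])))"
  unfolding TCg_def
  by (intro eval_pe eval_cst eval_lcons eval_lnil eval_Cn1[OF _ eval_CC] eval_Id') auto

lemma eval_Ecomp: "eval Ecomp (c # xs) (EE c)"
  unfolding Ecomp_def EE_def
  by (intro eval_pe eval_cst eval_lcons eval_lnil eval_TCg)

lemma eval_Body: "eval (Body d) [c, x, y] (opm d (EE c) x y)"
  unfolding Body_def
  by (rule eval_Cn3[OF _ _ eval_Ecomp eval_OPP]) (auto intro: eval_Id')

lemma inst_enc_K: "inst_enc (K d) = EE (recf_enc (Body d))"
  unfolding inst_enc_def EE_def K_def kS_def kD_def kF_def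
  by (simp only: inst.simps TB_def recf_enc.simps list.map)

lemma eval_TB: "eval (TB d) [x, y] (opm d (inst_enc (K d)) x y)"
  unfolding inst_enc_K TB_def
  by (rule eval_Cn3[OF eval_cst _ _ eval_Body]) (auto intro: eval_Id')

lemma times_K: "times_of (K d) x y = opm d (inst_enc (K d)) x y"
  unfolding times_of_def using eval_TB by (simp add: K_def run_eq)

lemma plus_K: "plus_of (K d) x y = x + y"
  unfolding plus_of_def using eval_ADD by (simp add: K_def run_eq)

lemma eval_ONE: "eval ONE xs 1"
  unfolding ONE_def using eval_S'[OF eval_Z] by simp

lemma B_K: "B_of (K d) = UNIV"
  unfolding B_of_def K_def using eval_ONE by simp

primrec gtree :: "nat \<Rightarrow> tree" where
  "gtree 0 = Node (0, 0) []"
| "gtree (Suc n) = Node (1, 1) [gtree n]"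

lemma wf_gtree: "wf_tree (set sigL) (gtree n)"
  by (induction n) (auto simp: sigL_def)

lemma wf_is_gtree: "wf_tree (set sigL) \<xi> \<Longrightarrow> \<exists>n. \<xi> = gtree n"
proof (induction \<xi>)
  case (Node s ts)
  then have s: "s = (0, 0) \<or> s = (1, 1)" and l: "length ts = snd s" by (auto simp: sigL_def)
  show ?case
  proof (cases "s = (0, 0)")
    case True then show ?thesis using l by (intro exI[of _ 0]) auto
  next
    case False
    then have s1: "s = (1, 1)" using s by simp
    then obtain t where ts: "ts = [t]" using l by (cases ts) auto
    then have "wf_tree (set sigL) t" using Node.prems by simp
    then obtain n where "t = gtree n" using Node.IH ts by auto
    then show ?thesis using s1 ts by (intro exI[of _ "Suc n"]) simp
  qed
qed

lemma bsum_plus: "bsum (+) 0 xs = sum_list (xs :: nat list)"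
  unfolding bsum_def by (induction xs) auto

lemma hV_gtree0: "hV (+) tm 0 u N \<delta> (gtree 0) q = tm u (\<delta> [] (0, 0) q)"
  by (simp add: bsum_plus bprod_def)

lemma hV_gtreeS: "hV (+) tm 0 u N \<delta> (gtree (Suc n)) q =
   sum_list (map (\<lambda>q'. tm (tm u (hV (+) tm 0 u N \<delta> (gtree n) q')) (\<delta> [q'] (1, 1) q)) [0..<N])"
  by (simp add: bsum_plus bprod_def comp_def)

lemma sum_unit: "r < N \<Longrightarrow> sum_list (map (\<lambda>q'. if q' = r then c else 0) [0..<N]) = (c :: nat)"
  by (simp add: sum_list_distinct_conv_sum_set)

lemma sum_unit': "r < N \<Longrightarrow> (\<And>q'. q' < N \<Longrightarrow> f q' = (if q' = r then c else 0)) \<Longrightarrow>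
   sum_list (map f [0..<N]) = (c :: nat)"
proof -
  assume r: "r < N" and h: "\<And>q'. q' < N \<Longrightarrow> f q' = (if q' = r then c else 0)"
  have "map f [0..<N] = map (\<lambda>q'. if q' = r then c else 0) [0..<N]"
    by (rule map_cong) (auto simp: h)
  then show ?thesis using sum_unit[OF r, of c] by (simp only:)
qed

locale tmops =
  fixes tm :: "nat \<Rightarrow> nat \<Rightarrow> nat"
  assumes T0: "tm 0 x = 0" and T0': "tm x 0 = 0" and T1: "tm 1 x = x" and T1': "tm x 1 = x"
begin

lemma hV_unitS:
  assumes r: "r < N" and h: "\<And>q. q < N \<Longrightarrow> hV (+) tm 0 1 N \<delta> (gtree n) q = (if q = r then 1 else 0)"
  shows "hV (+) tm 0 1 N \<delta> (gtree (Suc n)) q = \<delta> [r] (1, 1) q"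
  unfolding hV_gtreeS
proof (rule sum_unit'[OF r])
  fix q' assume q': "q' < N"
  show "tm (tm 1 (hV (+) tm 0 1 N \<delta> (gtree n) q')) (\<delta> [q'] (1, 1) q) = (if q' = r then \<delta> [r] (1, 1) q else 0)"
    unfolding h[OF q'] by (cases "q' = r") (simp_all only: if_True if_False T0 T0' T1 simp_thms)
qed

lemma sem_unit:
  assumes r: "r < N" and h: "\<And>q. q < N \<Longrightarrow> hV (+) tm 0 1 N \<delta> \<xi> q = (if q = r then 1 else 0)"
  shows "wta_sem (+) tm 0 1 N \<delta> F \<xi> = F r"
  unfolding wta_sem_def bsum_plus
proof (rule sum_unit'[OF r])
  fix q' assume q': "q' < N"
  show "tm (hV (+) tm 0 1 N \<delta> \<xi> q') (F q') = (if q' = r then F r else 0)"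
    unfolding h[OF q'] by (cases "q' = r") (simp_all only: if_True if_False T0 T0' T1 simp_thms)
qed

lemma crisp_step:
  assumes c: "crisp_deterministic (set sigL) 0 1 N \<delta>" and s: "s \<in> set sigL" and l: "length qs = snd s"
    and qs: "set qs \<subseteq> {..<N}"
  shows "\<exists>r<N. \<forall>q<N. \<delta> qs s q = (if q = r then 1 else 0)"
proof -
  have X: "(\<exists>!q. q < N \<and> \<delta> qs s q = 1)" "\<forall>q<N. \<delta> qs s q = 1 \<or> \<delta> qs s q = 0"
    using c[unfolded crisp_deterministic_def, rule_format, OF s l qs] by auto
  from X(1) obtain r where r: "r < N" "\<delta> qs s r = 1" and u: "\<forall>y. y < N \<and> \<delta> qs s y = 1 \<longrightarrow> y = r"
    by blast
  have "\<forall>q<N. \<delta> qs s q = (if q = r then 1 else 0)"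
  proof (intro allI impI)
    fix q assume q: "q < N"
    show "\<delta> qs s q = (if q = r then 1 else 0)"
    proof (cases "q = r")
      case True then show ?thesis using r by simp
    next
      case False
      then have "\<delta> qs s q \<noteq> 1" using u q by blast
      then show ?thesis using X(2) q False by auto
    qed
  qed
  then show ?thesis using r(1) by blast
qed

lemma crisp_unit:
  assumes c: "crisp_deterministic (set sigL) 0 1 N \<delta>"
  shows "\<exists>r<N. \<forall>q<N. hV (+) tm 0 1 N \<delta> (gtree n) q = (if q = r then 1 else 0)"
proof (induction n)
  case 0
  have "(0::nat, 0::nat) \<in> set sigL" by (simp add: sigL_def)
  from crisp_step[OF c this, of "[]"] obtain r where r: "r < N" "\<forall>q<N. \<delta> [] (0, 0) q = (if q = r then 1 else 0)"
    by auto
  have "\<forall>q<N. hV (+) tm 0 1 N \<delta> (gtree 0) q = (if q = r then 1 else 0)"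
    unfolding hV_gtree0 T1 using r(2) by blast
  then show ?case using r(1) by blast
next
  case (Suc n)
  then obtain r0 where r0: "r0 < N" "\<forall>q<N. hV (+) tm 0 1 N \<delta> (gtree n) q = (if q = r0 then 1 else 0)" by blast
  have "(1::nat, 1::nat) \<in> set sigL" by (simp add: sigL_def)
  from crisp_step[OF c this, of "[r0]"] r0(1) obtain r where r: "r < N" "\<forall>q<N. \<delta> [r0] (1, 1) q = (if q = r then 1 else 0)"
    by auto
  have "\<forall>q<N. hV (+) tm 0 1 N \<delta> (gtree (Suc n)) q = (if q = r then 1 else 0)"
    using hV_unitS[OF r0(1), of \<delta> n] r0(2) r(2) by simp
  then show ?case using r(1) by blast
qed

end

interpretation opm_tm: tmops "opm d e"
  by unfold_locales (simp_all add: opm_simps opm_simps1)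

primrec pw :: "recf \<Rightarrow> nat \<Rightarrow> nat \<Rightarrow> nat" where
  "pw d e 0 = 1"
| "pw d e (Suc n) = opm d e (pw d e n) 2"

lemma pw_id: "\<forall>n. Gm d e n = n \<Longrightarrow> pw d e n = Suc n"
proof (induction n)
  case 0 then show ?case by simp
next
  case (Suc n)
  show ?case
  proof (cases n)
    case 0 then show ?thesis by (simp add: opm_def)
  next
    case (Suc k)
    then have "pw d e n \<ge> 2" using Suc.IH Suc.prems by simp
    then show ?thesis using Suc.IH Suc.prems opm_ge2[of "pw d e n" 2 d e] by simp
  qed
qed

lemma pw_min: "T \<ge> 1 \<Longrightarrow> \<forall>n. Gm d e n = min n T \<Longrightarrow> pw d e n = Suc (min n T)"
proof (induction n)
  case 0 then show ?case by simp
next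
  case (Suc n)
  show ?case
  proof (cases n)
    case 0 then show ?thesis using Suc.prems by (simp add: opm_def)
  next
    case (Suc k)
    then have "min n T \<ge> 1" using Suc.prems by simp
    then have p: "pw d e n \<ge> 2" using Suc.IH Suc.prems by simp
    have "pw d e (Suc n) = Suc (Gm d e (pw d e n))" using opm_ge2[OF p, of 2] by simp
    also have "\<dots> = Suc (min (Suc (min n T)) T)" using Suc.IH Suc.prems by simp
    also have "\<dots> = Suc (min (Suc n) T)" using Suc.prems by (simp add: min_def)
    finally show ?thesis .
  qed
qed

lemma K_simps: "Sig_of (K d) = set sigL" "zeroB (K d) = 0" "oneB (K d) = 1" "nQ (K d) = 1"
  by (simp_all add: K_def Sig_of_def)

lemma plus_K': "plus_of (K d) = (+)" using plus_K by (intro ext) simp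
lemma times_K': "times_of (K d) = opm d (inst_enc (K d))" using times_K by (intro ext) simp

lemma delta_K: "delta_of (K d) [] (0, 0) 0 = 1" "delta_of (K d) [0] (1, 1) 0 = 2" "fin_of (K d) 0 = 1"
  by (simp_all add: delta_of_def fin_of_def K_def deltaL_def finL_def)

lemma sem_K: "sem_of (K d) (gtree n) = pw d (inst_enc (K d)) n"
proof -
  let ?e = "inst_enc (K d)"
  let ?h = "\<lambda>n. hV (+) (opm d ?e) 0 1 1 (delta_of (K d)) (gtree n) 0"
  have h: "?h n = pw d ?e n" for n
  proof (induction n)
    case 0 show ?case unfolding hV_gtree0 delta_K by (simp add: opm_simps opm_simps1)
  next
    case (Suc n)
    show ?case unfolding hV_gtreeS using Suc delta_K by (simp add: opm_simps opm_simps1)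
  qed
  show ?thesis unfolding sem_of_def plus_K' times_K' K_simps wta_sem_def bsum_plus
    using h[of n] delta_K by (simp add: opm_simps opm_simps1)
qed

lemma valid_K: "valid_inst (K d)"
proof -
  have sb: "strong_bimonoid UNIV (+) (opm d (inst_enc (K d))) 0 1"
    unfolding strong_bimonoid_def by (simp add: opm_assoc opm_simps opm_simps1)
  have bu: "bu_deterministic (set sigL) 0 1 (delta_of (K d))"
    unfolding bu_deterministic_def by auto
  have tb: "\<forall>a b. \<exists>r. eval (TB d) [a, b] r" using eval_TB[of d] by blast
  have ad: "\<forall>a b. \<exists>r. eval ADD [a, b] r" using eval_ADD by blast
  show ?thesis
    unfolding valid_inst_def B_K plus_K' times_K' K_simps
    using sb bu eval_ONE ad tb
    by (auto simp: sigL_def K_def finL_def)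
qed

lemma no_crisp:
  assumes ne: "\<not> (\<exists>m. evm d (inst_enc (K d)) m)"
  shows "\<not> has_crisp_equiv (K d)"
proof
  let ?e = "inst_enc (K d)"
  assume "has_crisp_equiv (K d)"
  then obtain N \<delta> F where c: "crisp_deterministic (set sigL) 0 1 N \<delta>"
    and eq: "\<forall>\<xi>. wf_tree (set sigL) \<xi> \<longrightarrow> wta_sem (+) (opm d ?e) 0 1 N \<delta> F \<xi> = sem_of (K d) \<xi>"
    unfolding has_crisp_equiv_def K_simps plus_K' times_K' by blast
  have gid: "\<forall>n. Gm d ?e n = n" using Gm_cases[of d ?e] ne by blast
  have "Suc n \<in> F ` {..<N}" for n
  proof -
    obtain r where r: "r < N" "\<forall>q<N. hV (+) (opm d ?e) 0 1 N \<delta> (gtree n) q = (if q = r then 1 else 0)"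
      using opm_tm.crisp_unit[OF c] by blast
    have "wta_sem (+) (opm d ?e) 0 1 N \<delta> F (gtree n) = F r"
      using opm_tm.sem_unit[OF r(1)] r(2) by blast
    moreover have "wta_sem (+) (opm d ?e) 0 1 N \<delta> F (gtree n) = Suc n"
      using eq wf_gtree[of n] sem_K[of d n] pw_id[OF gid] by simp
    ultimately show ?thesis using r(1) by force
  qed
  then have "range Suc \<subseteq> F ` {..<N}" by blast
  then have "finite (range Suc)" using finite_subset by blast
  then have "finite (UNIV :: nat set)" using finite_imageD inj_Suc by blast
  then show False by simp
qed

lemma yes_crisp:
  assumes ex: "\<exists>m. evm d (inst_enc (K d)) m"
  shows "has_crisp_equiv (K d)"
proof -
  let ?e = "inst_enc (K d)"
  define T where "T = Suc (LEAST m. evm d ?e m)"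
  have T1: "T \<ge> 1" unfolding T_def by simp
  have gm: "\<forall>n. Gm d ?e n = min n T" using Gm_cases[of d ?e] ex unfolding T_def by blast
  define N where "N = Suc T"
  define \<delta> where "\<delta> = (\<lambda>qs s q. if s = (0::nat, 0::nat) \<and> qs = [] then (if q = 0 then 1 else 0)
      else if s = (1, 1) \<and> length qs = 1 then (if q = min (Suc (hd qs)) T then 1 else (0::nat)) else 0)"
  define F where "F = (\<lambda>q::nat. Suc q)"
  have c: "crisp_deterministic (set sigL) 0 1 N \<delta>"
    unfolding crisp_deterministic_def
  proof (intro ballI allI impI)
    fix s qs assume s: "s \<in> set sigL" and l: "length qs = snd s" and qs: "set qs \<subseteq> {..<N}"
    from s have "s = (0, 0) \<or> s = (1, 1)" by (auto simp: sigL_def)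
    then have A: "\<exists>!q. q < N \<and> \<delta> qs s q = 1"
    proof
      assume s0: "s = (0, 0)"
      then have "qs = []" using l by simp
      then show ?thesis using s0 unfolding \<delta>_def N_def by auto
    next
      assume s1: "s = (1, 1)"
      then have "length qs = 1" using l by simp
      moreover have "min (Suc (hd qs)) T < N" unfolding N_def by simp
      ultimately show ?thesis using s1 unfolding \<delta>_def by auto
    qed
    have "\<forall>q<N. \<delta> qs s q = 1 \<or> \<delta> qs s q = 0" unfolding \<delta>_def by auto
    with A show "(\<exists>!q. q < N \<and> \<delta> qs s q = 1) \<and> (\<forall>q<N. \<delta> qs s q = 1 \<or> \<delta> qs s q = 0)" by blast
  qed
  have hv: "\<forall>q<N. hV (+) (opm d ?e) 0 1 N \<delta> (gtree n) q = (if q = min n T then 1 else 0)" for n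
  proof (induction n)
    case 0 show ?case unfolding hV_gtree0 by (simp add: \<delta>_def opm_simps opm_simps1)
  next
    case (Suc n)
    have r: "min n T < N" unfolding N_def by simp
    have "min (Suc (min n T)) T = min (Suc n) T" by (simp add: min_def)
    then show ?case using opm_tm.hV_unitS[OF r, where \<delta>=\<delta> and n=n and d=d and e="?e"] Suc by (simp add: \<delta>_def)
  qed
  have sem: "wta_sem (+) (opm d ?e) 0 1 N \<delta> F (gtree n) = sem_of (K d) (gtree n)" for n
  proof -
    have r: "min n T < N" unfolding N_def by simp
    have "wta_sem (+) (opm d ?e) 0 1 N \<delta> F (gtree n) = F (min n T)"
      using opm_tm.sem_unit[OF r] hv by blast
    then show ?thesis using sem_K[of d n] pw_min[OF T1 gm] by (simp add: F_def)
  qed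
  show ?thesis
    unfolding has_crisp_equiv_def K_simps plus_K' times_K' B_K
  proof (intro exI[of _ N] exI[of _ \<delta>] exI[of _ F] conjI allI impI)
    show "1 \<le> N" unfolding N_def by simp
    show "crisp_deterministic (set sigL) 0 1 N \<delta>" by (rule c)
    fix \<xi> assume "wf_tree (set sigL) \<xi>"
    then obtain n where "\<xi> = gtree n" using wf_is_gtree by blast
    then show "wta_sem (+) (opm d ?e) 0 1 N \<delta> F \<xi> = sem_of (K d) \<xi>" using sem by simp
  qed simp_all
qed

theorem theorem8p5:
  shows "\<not> (\<exists>d. \<forall>I. valid_inst I \<longrightarrow>
            eval d [inst_enc I] (if has_crisp_equiv I then 1 else 0))"
proof
  assume "\<exists>d. \<forall>I. valid_inst I \<longrightarrow> eval d [inst_enc I] (if has_crisp_equiv I then 1 else 0)"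
  then obtain d where H: "\<forall>I. valid_inst I \<longrightarrow> eval d [inst_enc I] (if has_crisp_equiv I then 1 else 0)" by blast
  let ?e = "inst_enc (K d)"
  have H1: "eval d [?e] (if has_crisp_equiv (K d) then 1 else 0)" using H valid_K by blast
  show False
  proof (cases "\<exists>m. evm d ?e m")
    case True
    then obtain m where "evm d ?e m" by blast
    then have "fe d m [?e] = Suc 0" unfolding evm_def by simp
    then have e0: "eval d [?e] 0" by (rule fe_sound)
    have "eval d [?e] 1" using H1 yes_crisp[OF True] by simp
    from eval_det[OF e0 this] show False by simp
  next
    case False
    have "eval d [?e] 0" using H1 no_crisp[OF False] by simp
    then obtain M where "\<forall>m\<ge>M. fe d m [?e] = Suc 0" using fe_complete by blast
    then have "evm d ?e M" unfolding evm_def by simp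
    then show False using False by blast
  qed
qed

end
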